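(* Let $\theta_1,\ldots,\theta_N\in[0,1)$ be distinct, $z_q=e^{2\pi i\theta_q}$, let $\mathbf{V}$ be the $N\times N$ Vandermonde matrix with these phases, and let $\lambda_1(N)$ be the smallest eigenvalue of $\mathbf{V}^*\mathbf{V}$. For $p=1,\ldots,N$ let $$T_p(z)=\prod_{q\ne p}\frac{z-z_q}{|z_p-z_q|}.$$ Then $$\frac{1}{N^3\max_p\max_{|z|=1}|T_p(z)|^2}\le\lambda_1(N)\le\frac{1}{\max_p\max_{|z|=1}|T_p(z)|^2}.$$ Moreover, if $p_0$ is an index with $\prod_{q\ne p_0}|z_{p_0}-z_q|\le N$ (such an index always exists), then $$\lambda_1(N)\le\frac{N^2}{\max_{|z|=1}\prod_{q\ne p_0}|z-z_q|^2}\le\frac{4N^2}{\max_{|z|=1}\prod_{q=1}^N|z-z_q|^2}.$$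
   Context: The $N\times N$ Vandermonde matrix has entries $V(j,q)=\frac{1}{\sqrt N}e^{2\pi i (j-1)\theta_q}$, $j,q=1,\ldots,N$. *)

theory Defs
  imports "HOL-Analysis.Analysis" "Jordan_Normal_Form.Schur_Decomposition"
begin

text \<open>Vandermonde matrix (0-based indices): V(j,q) = exp(2 pi i j theta_q) / sqrt N,
  j, q = 0..N-1 (row j corresponds to the paper's row j+1).\<close>
definition vandermonde :: "nat \<Rightarrow> (nat \<Rightarrow> real) \<Rightarrow> complex mat" where
  "vandermonde N \<theta> = mat N N (\<lambda>(j, q).
     complex_of_real (1 / sqrt (real N)) * exp (2 * pi * \<i> * of_nat j * complex_of_real (\<theta> q)))"

definition smallest_eigenvalue :: "complex mat \<Rightarrow> real" where
  "smallest_eigenvalue M = Min {x :: real. eigenvalue M (complex_of_real x)}"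

definition node :: "(nat \<Rightarrow> real) \<Rightarrow> nat \<Rightarrow> complex" where
  "node \<theta> q = exp (2 * pi * \<i> * complex_of_real (\<theta> q))"

definition Tpoly :: "nat \<Rightarrow> (nat \<Rightarrow> real) \<Rightarrow> nat \<Rightarrow> complex \<Rightarrow> complex" where
  "Tpoly N \<theta> p z = (\<Prod>q \<in> {..<N} - {p}.
      (z - node \<theta> q) / complex_of_real (cmod (node \<theta> p - node \<theta> q)))"

end

theory Submission
  imports Defs
begin


lemma adj_carrier: "V \<in> carrier_mat n n \<Longrightarrow> mat_adjoint (V::complex mat) \<in> carrier_mat n n"
  unfolding mat_adjoint_def by auto

lemma adj_index: "V \<in> carrier_mat n n \<Longrightarrow> i < n \<Longrightarrow> j < n \<Longrightarrow>
   mat_adjoint (V::complex mat) $$ (i,j) = cnj (V $$ (j,i))"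
  unfolding mat_adjoint_def by (auto simp: mat_of_rows_def)

lemma AV_apply:
  fixes V :: "complex mat"
  assumes V: "V \<in> carrier_mat n n" and v: "v \<in> carrier_vec n" and k: "k < n"
  shows "((mat_adjoint V * V) *\<^sub>v v) $ k = (\<Sum>j<n. cnj (V $$ (j,k)) * (\<Sum>q<n. V $$ (j,q) * v $ q))"
proof -
  have "(mat_adjoint V * V) *\<^sub>v v = mat_adjoint V *\<^sub>v (V *\<^sub>v v)"
    using adj_carrier[OF V] V v by auto
  also have "\<dots> $ k = (\<Sum>j<n. mat_adjoint V $$ (k,j) * (V *\<^sub>v v) $ j)"
    using adj_carrier[OF V] V v k by (auto simp: scalar_prod_def lessThan_atLeast0 row_def)
  also have "\<dots> = (\<Sum>j<n. cnj (V $$ (j,k)) * (\<Sum>q<n. V $$ (j,q) * v $ q))"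
    using V v k by (intro sum.cong) (auto simp: adj_index scalar_prod_def lessThan_atLeast0 row_def)
  finally show ?thesis .
qed

lemma cn2: "(complex_of_real (cmod z))^2 = z * cnj z"
  by (metis complex_norm_square of_real_power)

lemma sum_cnj_swap:
  fixes V :: "complex mat"
  shows "(\<Sum>k<n. cnj (f k) * (\<Sum>j<n. cnj (V $$ (j,k)) * (\<Sum>q<n. V $$ (j,q) * g q)))
       = (\<Sum>j<n. cnj (\<Sum>q<n. V $$ (j,q) * f q) * (\<Sum>q<n. V $$ (j,q) * g q))"
proof -
  have "(\<Sum>k<n. cnj (f k) * (\<Sum>j<n. cnj (V $$ (j,k)) * (\<Sum>q<n. V $$ (j,q) * g q)))
     = (\<Sum>k<n. \<Sum>j<n. cnj (V $$ (j,k) * f k) * (\<Sum>q<n. V $$ (j,q) * g q))"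
    by (simp add: sum_distrib_left mult.assoc mult.left_commute)
  also have "\<dots> = (\<Sum>j<n. \<Sum>k<n. cnj (V $$ (j,k) * f k) * (\<Sum>q<n. V $$ (j,q) * g q))"
    by (rule sum.swap)
  also have "\<dots> = (\<Sum>j<n. cnj (\<Sum>q<n. V $$ (j,q) * f q) * (\<Sum>q<n. V $$ (j,q) * g q))"
    by (simp add: sum_distrib_right)
  finally show ?thesis .
qed

lemma eig_rayleigh:
  fixes V :: "complex mat"
  assumes V: "V \<in> carrier_mat n n" and ev: "eigenvalue (mat_adjoint V * V) x"
  shows "\<exists>f. (\<Sum>q<n. (cmod (f q))^2) > 0 \<and>
     x * of_real (\<Sum>q<n. (cmod (f q))^2) = of_real (\<Sum>j<n. (cmod (\<Sum>q<n. V $$ (j,q) * f q))^2)"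
proof -
  have AC: "mat_adjoint V * V \<in> carrier_mat n n" using adj_carrier[OF V] V by auto
  obtain v where v: "v \<in> carrier_vec n" "v \<noteq> 0\<^sub>v n" "(mat_adjoint V * V) *\<^sub>v v = x \<cdot>\<^sub>v v"
    using ev AC unfolding eigenvalue_def eigenvector_def by auto
  define f where "f = (\<lambda>q. v $ q)"
  obtain q0 where q0: "q0 < n" "v $ q0 \<noteq> 0" using v(1,2) by (auto simp: vec_eq_iff)
  have "(\<Sum>q<n. (cmod (f q))^2) \<ge> (cmod (f q0))^2"
    by (rule member_le_sum) (use q0 in auto)
  moreover have "(cmod (f q0))^2 > 0" using q0 f_def by auto
  ultimately have pos: "(\<Sum>q<n. (cmod (f q))^2) > 0" by linarith
  have "(\<Sum>k<n. cnj (f k) * ((mat_adjoint V * V) *\<^sub>v v) $ k) = (\<Sum>k<n. cnj (f k) * (x * f k))"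
    using v(3) v(1) by (intro sum.cong) (auto simp: f_def)
  also have "\<dots> = x * of_real (\<Sum>q<n. (cmod (f q))^2)"
    by (simp add: sum_distrib_left cn2 mult_ac)
  finally have e1: "(\<Sum>k<n. cnj (f k) * ((mat_adjoint V * V) *\<^sub>v v) $ k) = x * of_real (\<Sum>q<n. (cmod (f q))^2)" .
  have "(\<Sum>k<n. cnj (f k) * ((mat_adjoint V * V) *\<^sub>v v) $ k)
      = (\<Sum>k<n. cnj (f k) * (\<Sum>j<n. cnj (V $$ (j,k)) * (\<Sum>q<n. V $$ (j,q) * f q)))"
    using AV_apply[OF V v(1)] by (intro sum.cong) (auto simp: f_def)
  also have "\<dots> = (\<Sum>j<n. cnj (\<Sum>q<n. V $$ (j,q) * f q) * (\<Sum>q<n. V $$ (j,q) * f q))"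
    by (rule sum_cnj_swap)
  also have "\<dots> = of_real (\<Sum>j<n. (cmod (\<Sum>q<n. V $$ (j,q) * f q))^2)"
    unfolding of_real_sum of_real_power cn2 by (simp add: mult.commute)
  finally have e2: "(\<Sum>k<n. cnj (f k) * ((mat_adjoint V * V) *\<^sub>v v) $ k) = of_real (\<Sum>j<n. (cmod (\<Sum>q<n. V $$ (j,q) * f q))^2)" .
  show ?thesis by (rule exI[of _ f]) (use pos e1 e2 in auto)
qed

lemma quad_zero:
  fixes a b :: real
  assumes "\<And>t. 2 * t * a + t^2 * b \<ge> 0"
  shows "a = 0"
proof (rule ccontr)
  assume a: "a \<noteq> 0"
  define t where "t = - a / (\<bar>b\<bar> + 1)"
  have d: "\<bar>b\<bar> + 1 > 0" by simp
  have "2 * t * a + t^2 * b \<le> 2 * t * a + t^2 * \<bar>b\<bar>" by (simp add: mult_left_mono)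
  also have "\<dots> = (a^2 / (\<bar>b\<bar>+1)) * (\<bar>b\<bar> / (\<bar>b\<bar>+1) - 2)"
  proof -
    have g: "\<And>B c. B > 0 \<Longrightarrow> 2 * (- a / B) * a + (- a / B)^2 * c = (a^2 / B) * (c / B - 2)"
      by (simp add: field_simps power2_eq_square)
    show ?thesis unfolding t_def by (rule g[OF d])
  qed
  also have "\<dots> < 0"
  proof (rule mult_pos_neg)
    show "0 < a\<^sup>2 / (\<bar>b\<bar> + 1)" using a d by simp
    have "\<bar>b\<bar> / (\<bar>b\<bar>+1) < 1" using d by simp
    then show "\<bar>b\<bar> / (\<bar>b\<bar> + 1) - 2 < 0" by linarith
  qed
  finally show False using assms[of t] by simp
qed

lemma cmod_add_real_sq:
  fixes a b :: complex and t :: real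
  shows "(cmod (a + of_real t * b))^2 = (cmod a)^2 + 2 * t * Re (cnj a * b) + t^2 * (cmod b)^2"
  by (simp only: cmod_power2) (simp add: power2_eq_square algebra_simps)

lemma rayleigh_min:
  fixes V :: "complex mat"
  assumes V: "V \<in> carrier_mat n n" and npos: "0 < n"
  shows "\<exists>\<mu>::real. eigenvalue (mat_adjoint V * V) (of_real \<mu>) \<and>
     (\<forall>f. \<mu> * (\<Sum>q<n. (cmod (f q))^2) \<le> (\<Sum>j<n. (cmod (\<Sum>q<n. V $$ (j,q) * f q))^2))"
proof -
  define nv where "nv = (\<lambda>f::nat \<Rightarrow> complex. \<Sum>q<n. (cmod (f q))^2)"
  define qf where "qf = (\<lambda>f::nat \<Rightarrow> complex. \<Sum>j<n. (cmod (\<Sum>q<n. V $$ (j,q) * f q))^2)"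
  define K where "K = (\<lambda>i. if i < n then cball (0::complex) 1 else {0})"
  define S where "S = PiE UNIV K \<inter> {f. nv f = 1}"
  have cc: "\<And>q. continuous_on UNIV (\<lambda>f::nat\<Rightarrow>complex. f q)" by simp
  have cnv: "continuous_on UNIV nv" unfolding nv_def
    by (intro continuous_intros cc)
  have cqf: "continuous_on UNIV qf" unfolding qf_def
    by (intro continuous_intros cc)
  have "compactin (product_topology (\<lambda>i. euclidean) UNIV) (PiE UNIV K)"
    by (subst compactin_PiE) (auto simp: K_def)
  hence cK: "compact (PiE UNIV K)" by (simp add: euclidean_product_topology)
  have cl: "closed {f. nv f = 1}"
    by (rule closed_Collect_eq[OF cnv continuous_on_const])
  have cS: "compact S" unfolding S_def by (rule compact_Int_closed[OF cK cl])
  define e0 where "e0 = (\<lambda>i::nat. if i = 0 then (1::complex) else 0)"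
  have "e0 \<in> S" unfolding S_def
  proof
    show "e0 \<in> PiE UNIV K" using npos by (auto simp: e0_def K_def PiE_iff)
    have "nv e0 = (\<Sum>q<n. if q = 0 then 1 else 0)" unfolding nv_def e0_def
      by (intro sum.cong) auto
    also have "\<dots> = 1" using npos by (simp add: sum.delta)
    finally show "e0 \<in> {f. nv f = 1}" by simp
  qed
  hence Sne: "S \<noteq> {}" by auto
  obtain f0 where f0: "f0 \<in> S" and f0min: "\<And>y. y \<in> S \<Longrightarrow> qf f0 \<le> qf y"
    using continuous_attains_inf[OF cS Sne continuous_on_subset[OF cqf]] by auto
  define \<mu> where "\<mu> = qf f0"
  have nvf0: "nv f0 = 1" using f0 by (auto simp: S_def)
  have main: "\<mu> * nv g \<le> qf g" for g
  proof (cases "nv g = 0")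
    case True thus ?thesis by (simp add: qf_def sum_nonneg)
  next
    case False
    have nvpos: "nv g > 0" using False unfolding nv_def
      by (metis (no_types, lifting) order_less_le sum_nonneg zero_le_power2)
    define s where "s = sqrt (nv g)"
    have s: "s > 0" "s^2 = nv g" using nvpos by (auto simp: s_def)
    define h where "h = (\<lambda>i. if i < n then g i / of_real s else 0)"
    have nvh: "nv h = nv g / s^2" unfolding nv_def h_def
      by (simp add: sum_divide_distrib norm_divide power_divide)
    have qfh: "qf h = qf g / s^2"
    proof -
      have e: "\<And>j. (\<Sum>q<n. V $$ (j,q) * h q) = (\<Sum>q<n. V $$ (j,q) * g q) / of_real s"
        unfolding h_def by (simp add: sum_divide_distrib)
      have "qf h = (\<Sum>j<n. (cmod (\<Sum>q<n. V $$ (j,q) * g q))^2 / s^2)"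
        unfolding qf_def e using s(1) by (simp add: norm_divide power_divide)
      also have "\<dots> = qf g / s^2" by (simp add: qf_def sum_divide_distrib)
      finally show ?thesis .
    qed
    have "h \<in> S" unfolding S_def
    proof
      show "h \<in> {f. nv f = 1}" using nvh s nvpos by simp
      show "h \<in> PiE UNIV K" unfolding PiE_iff
      proof (intro conjI ballI)
        fix i :: nat assume "i \<in> UNIV"
        show "h i \<in> K i"
        proof (cases "i < n")
          case True
          have "(cmod (g i))^2 \<le> nv g" unfolding nv_def
            by (rule member_le_sum) (use True in auto)
          hence "(cmod (g i))^2 \<le> s^2" using s by simp
          hence "cmod (g i) \<le> s" by (rule power2_le_imp_le) (use s(1) in auto)
          thus ?thesis using True s(1) by (simp add: h_def K_def norm_divide)
        qed (simp add: h_def K_def)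
      qed simp
    qed
    hence "\<mu> \<le> qf g / s^2" using f0min qfh unfolding \<mu>_def by metis
    thus ?thesis using s nvpos by (simp add: field_simps)
  qed
  define a where "a = (\<lambda>j. \<Sum>q<n. V $$ (j,q) * f0 q)"
  define G where "G = (\<lambda>k. (\<Sum>j<n. cnj (V $$ (j,k)) * a j) - of_real \<mu> * f0 k)"
  have lin: "Re (\<Sum>k<n. h k * cnj (G k)) = 0" for h
  proof -
    define b where "b = (\<lambda>j. \<Sum>q<n. V $$ (j,q) * h q)"
    define X where "X = Re (\<Sum>j<n. cnj (a j) * b j) - \<mu> * Re (\<Sum>k<n. cnj (f0 k) * h k)"
    have "2 * t * X + t^2 * (qf h - \<mu> * nv h) \<ge> 0" for t :: real
    proof -
      define g where "g = (\<lambda>q. f0 q + of_real t * h q)"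
      have eq: "\<And>j. (\<Sum>q<n. V $$ (j,q) * g q) = a j + of_real t * b j"
        by (simp add: g_def a_def b_def algebra_simps sum.distrib sum_distrib_left)
      have qf0: "qf f0 = (\<Sum>j<n. (cmod (a j))^2)" by (simp add: qf_def a_def)
      have qfh: "qf h = (\<Sum>j<n. (cmod (b j))^2)" by (simp add: qf_def b_def)
      have "qf g = (\<Sum>j<n. (cmod (a j + of_real t * b j))^2)" unfolding qf_def eq by simp
      also have "\<dots> = (\<Sum>j<n. (cmod (a j))^2) + 2 * t * Re (\<Sum>j<n. cnj (a j) * b j) + t^2 * (\<Sum>j<n. (cmod (b j))^2)"
        by (simp add: cmod_add_real_sq sum.distrib sum_distrib_left Re_sum distrib_left)
      finally have qg: "qf g = qf f0 + 2 * t * Re (\<Sum>j<n. cnj (a j) * b j) + t^2 * qf h"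
        unfolding qf0 qfh .
      have ng: "nv g = nv f0 + 2 * t * Re (\<Sum>k<n. cnj (f0 k) * h k) + t^2 * nv h"
        unfolding nv_def g_def by (simp add: cmod_add_real_sq sum.distrib sum_distrib_left Re_sum distrib_left)
      have "\<mu> * nv g \<le> qf g" by (rule main)
      thus ?thesis using qg ng nvf0 unfolding X_def \<mu>_def by (simp add: algebra_simps)
    qed
    hence X0: "X = 0" by (intro quad_zero) auto
    have "(\<Sum>j<n. cnj (a j) * b j) = (\<Sum>k<n. h k * cnj (\<Sum>j<n. cnj (V $$ (j,k)) * a j))"
    proof -
      have "(\<Sum>j<n. cnj (a j) * b j) = (\<Sum>j<n. \<Sum>k<n. h k * (V $$ (j,k) * cnj (a j)))"
        unfolding b_def by (simp add: sum_distrib_left mult_ac)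
      also have "\<dots> = (\<Sum>k<n. \<Sum>j<n. h k * (V $$ (j,k) * cnj (a j)))" by (rule sum.swap)
      also have "\<dots> = (\<Sum>k<n. h k * cnj (\<Sum>j<n. cnj (V $$ (j,k)) * a j))"
        by (simp add: sum_distrib_left)
      finally show ?thesis .
    qed
    moreover have "Re (\<Sum>k<n. cnj (f0 k) * h k) = Re (\<Sum>k<n. h k * cnj (f0 k))"
      by (simp add: Re_sum mult.commute)
    ultimately have "X = Re (\<Sum>k<n. h k * cnj (\<Sum>j<n. cnj (V $$ (j,k)) * a j)) - \<mu> * Re (\<Sum>k<n. h k * cnj (f0 k))"
      unfolding X_def by simp
    also have "\<dots> = Re (\<Sum>k<n. h k * cnj (G k))"
      unfolding G_def by (simp add: Re_sum sum_subtractf algebra_simps sum_distrib_left)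
    finally show ?thesis using X0 by simp
  qed
  have G0: "G k = 0" if k: "k < n" for k
  proof -
    have "Re (\<Sum>k<n. G k * cnj (G k)) = 0" by (rule lin)
    moreover have "(\<Sum>k<n. G k * cnj (G k)) = of_real (\<Sum>k<n. (cmod (G k))^2)"
      by (simp add: cn2)
    ultimately have "(\<Sum>k<n. (cmod (G k))^2) = 0" by simp
    hence "(cmod (G k))^2 = 0" using k
      by (subst (asm) sum_nonneg_eq_0_iff) auto
    thus ?thesis by simp
  qed
  have AC: "mat_adjoint V * V \<in> carrier_mat n n" using adj_carrier[OF V] V by auto
  define v where "v = vec n f0"
  have vc: "v \<in> carrier_vec n" by (simp add: v_def)
  have "(mat_adjoint V * V) *\<^sub>v v = of_real \<mu> \<cdot>\<^sub>v v"
  proof (rule eq_vecI)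
    fix k assume "k < dim_vec (of_real \<mu> \<cdot>\<^sub>v v)"
    hence k: "k < n" by (simp add: v_def)
    have "((mat_adjoint V * V) *\<^sub>v v) $ k = (\<Sum>j<n. cnj (V $$ (j,k)) * a j)"
      using AV_apply[OF V vc k] unfolding a_def v_def by simp
    also have "\<dots> = of_real \<mu> * f0 k" using G0[OF k] unfolding G_def by simp
    finally show "((mat_adjoint V * V) *\<^sub>v v) $ k = (of_real \<mu> \<cdot>\<^sub>v v) $ k" using k by (simp add: v_def)
  qed (use AC adj_carrier[OF V] in \<open>simp add: v_def\<close>)
  moreover have "v \<noteq> 0\<^sub>v n"
  proof
    assume "v = 0\<^sub>v n"
    hence "\<And>q. q < n \<Longrightarrow> f0 q = 0" unfolding v_def by (metis index_vec index_zero_vec(1))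
    hence "nv f0 = 0" unfolding nv_def by simp
    thus False using nvf0 by simp
  qed
  ultimately have "eigenvalue (mat_adjoint V * V) (of_real \<mu>)"
    unfolding eigenvalue_def eigenvector_def using AC vc adj_carrier[OF V] by auto
  thus ?thesis using main unfolding nv_def qf_def by blast
qed



lemma node_norm[simp]: "cmod (node \<theta> q) = 1"
  by (simp add: node_def)

lemma node_inj:
  assumes inj: "inj_on \<theta> {..<N}" and rng: "\<And>q. q < N \<Longrightarrow> 0 \<le> \<theta> q \<and> \<theta> q < 1"
    and q: "q < N" and r: "r < N" and e: "node \<theta> q = node \<theta> r"
  shows "q = r"
proof -
  from e obtain n :: int where n: "2 * pi * \<i> * complex_of_real (\<theta> q) = 2 * pi * \<i> * complex_of_real (\<theta> r) + (of_int (2 * n) * pi) * \<i>"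
    unfolding node_def exp_eq by blast
  hence "Im (2 * pi * \<i> * complex_of_real (\<theta> q)) = Im (2 * pi * \<i> * complex_of_real (\<theta> r) + (of_int (2 * n) * pi) * \<i>)"
    by simp
  hence "2 * pi * \<theta> q = 2 * pi * \<theta> r + 2 * n * pi" by simp
  hence "2 * pi * \<theta> q = 2 * pi * (\<theta> r + n)" by (simp add: algebra_simps)
  hence "\<theta> q = \<theta> r + n" by (subst (asm) mult_cancel_left) simp
  moreover have "\<bar>\<theta> q - \<theta> r\<bar> < 1" using rng[OF q] rng[OF r] by auto
  ultimately have "n = 0" by simp
  hence "\<theta> q = \<theta> r" using \<open>\<theta> q = \<theta> r + n\<close> by simp
  thus ?thesis using inj q r by (auto dest: inj_onD)
qed

lemma vdm_carrier: "vandermonde N \<theta> \<in> carrier_mat N N"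
  by (simp add: vandermonde_def)

lemma vdm_index: "j < N \<Longrightarrow> q < N \<Longrightarrow>
  vandermonde N \<theta> $$ (j,q) = complex_of_real (1 / sqrt (real N)) * node \<theta> q ^ j"
  unfolding vandermonde_def node_def
  by (simp add: exp_of_nat_mult[symmetric] mult_ac)

definition Dp :: "(nat \<Rightarrow> real) \<Rightarrow> nat \<Rightarrow> nat \<Rightarrow> complex" where
  "Dp \<theta> N p = (\<Prod>q\<in>{..<N}-{p}. node \<theta> p - node \<theta> q)"

definition Lp :: "(nat \<Rightarrow> real) \<Rightarrow> nat \<Rightarrow> nat \<Rightarrow> complex poly" where
  "Lp \<theta> N p = Polynomial.smult (inverse (Dp \<theta> N p)) (\<Prod>q\<in>{..<N}-{p}. [:- node \<theta> q, 1:])"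

lemma poly_sum_lt:
  fixes P :: "complex poly"
  assumes "degree P < (N::nat)"
  shows "poly P x = (\<Sum>j<N. coeff P j * x^j)"
proof -
  have "poly P x = (\<Sum>j\<le>degree P. coeff P j * x^j)" by (rule poly_altdef)
  also have "\<dots> = (\<Sum>j<N. coeff P j * x^j)"
    by (rule sum.mono_neutral_left) (use assms in \<open>auto simp: coeff_eq_0\<close>)
  finally show ?thesis .
qed

context
  fixes N :: nat and \<theta> :: "nat \<Rightarrow> real"
  assumes inj: "inj_on \<theta> {..<N}" and rng: "\<And>q. q < N \<Longrightarrow> 0 \<le> \<theta> q \<and> \<theta> q < 1"
begin

lemma node_neq: "q < N \<Longrightarrow> r < N \<Longrightarrow> q \<noteq> r \<Longrightarrow> node \<theta> q \<noteq> node \<theta> r"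
  using node_inj[OF inj rng] by blast

lemma Dp_nz: "p < N \<Longrightarrow> Dp \<theta> N p \<noteq> 0"
  unfolding Dp_def using node_neq by auto

lemma cmod_Dp: "cmod (Dp \<theta> N p) = (\<Prod>q\<in>{..<N}-{p}. cmod (node \<theta> p - node \<theta> q))"
  unfolding Dp_def by (simp add: prod_norm)

lemma poly_Lp: "poly (Lp \<theta> N p) x = (\<Prod>q\<in>{..<N}-{p}. x - node \<theta> q) / Dp \<theta> N p"
  unfolding Lp_def by (simp add: poly_prod field_simps)

lemma degree_Lp: assumes p: "p < N" shows "degree (Lp \<theta> N p) \<le> N - 1"
proof -
  have "degree (Lp \<theta> N p) \<le> degree (\<Prod>q\<in>{..<N}-{p}. [:- node \<theta> q, 1:])"
    unfolding Lp_def by (rule degree_smult_le)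
  also have "\<dots> \<le> (\<Sum>q\<in>{..<N}-{p}. degree [:- node \<theta> q, 1:])"
    using degree_prod_sum_le[of "{..<N}-{p}" "\<lambda>q. [:- node \<theta> q, 1:]"] by (simp add: o_def)
  also have "\<dots> = card ({..<N}-{p})" by simp
  also have "\<dots> \<le> N - 1"
    using p by (simp add: card_Diff_singleton_if)
  finally show ?thesis .
qed

lemma poly_Lp_sum: "p < N \<Longrightarrow> poly (Lp \<theta> N p) x = (\<Sum>j<N. coeff (Lp \<theta> N p) j * x^j)"
  by (rule poly_sum_lt) (use degree_Lp[of p] in \<open>simp add: less_Suc_eq_le\<close>)

lemma poly_Lp_node: "p < N \<Longrightarrow> q < N \<Longrightarrow> poly (Lp \<theta> N p) (node \<theta> q) = (if q = p then 1 else 0)"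
proof (cases "q = p")
  case True
  assume p: "p < N"
  show ?thesis using True Dp_nz[OF p] unfolding poly_Lp by (simp add: Dp_def)
next
  case False
  assume p: "p < N" and q: "q < N"
  have "(\<Prod>r\<in>{..<N}-{p}. node \<theta> q - node \<theta> r) = 0"
    using False q by (intro prod_zero) auto
  thus ?thesis using False unfolding poly_Lp by simp
qed

lemma cmod_Tpoly: "cmod (Tpoly N \<theta> p x) = cmod (poly (Lp \<theta> N p) x)"
  unfolding Tpoly_def poly_Lp cmod_Dp norm_divide prod_norm[symmetric]
  by (simp add: prod_dividef norm_divide)

lemma lagrange_coeff:
  assumes j: "j < N" and l: "l < N"
  shows "(\<Sum>q<N. node \<theta> q ^ j * coeff (Lp \<theta> N q) l) = (if j = l then 1 else 0)"
proof -
  define P where "P = (\<Sum>q<N. Polynomial.smult (node \<theta> q ^ j) (Lp \<theta> N q)) - monom 1 j"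
  have degP: "degree P \<le> N - 1"
    unfolding P_def
  proof (rule degree_diff_le)
    show "degree (\<Sum>q<N. Polynomial.smult (node \<theta> q ^ j) (Lp \<theta> N q)) \<le> N - 1"
    proof (rule degree_sum_le)
      fix q assume "q \<in> {..<N}"
      thus "degree (Polynomial.smult (node \<theta> q ^ j) (Lp \<theta> N q)) \<le> N - 1"
        using order.trans[OF degree_smult_le degree_Lp] by blast
    qed simp
    show "degree (monom (1::complex) j) \<le> N - 1" using j by (simp add: degree_monom_eq)
  qed
  have roots: "poly P (node \<theta> r) = 0" if r: "r < N" for r
  proof -
    have "poly P (node \<theta> r) = (\<Sum>q<N. node \<theta> q ^ j * (if r = q then 1 else 0)) - node \<theta> r ^ j"
      unfolding P_def using r by (simp add: poly_sum poly_monom poly_Lp_node)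
    also have "(\<Sum>q<N. node \<theta> q ^ j * (if r = q then 1 else 0)) = (\<Sum>q<N. if r = q then node \<theta> q ^ j else 0)"
      by (intro sum.cong) auto
    also have "\<dots> - node \<theta> r ^ j = 0" using r by (simp add: sum.delta)
    finally show ?thesis .
  qed
  have P0: "P = 0"
  proof (rule ccontr)
    assume nz: "P \<noteq> 0"
    have "node \<theta> ` {..<N} \<subseteq> {x. poly P x = 0}" using roots by auto
    hence "card (node \<theta> ` {..<N}) \<le> card {x. poly P x = 0}"
      by (intro card_mono poly_roots_finite nz)
    also have "\<dots> \<le> degree P" by (rule poly_roots_degree[OF nz])
    also have "\<dots> < N" using degP j by linarith
    finally have "card (node \<theta> ` {..<N}) < N" .
    moreover have "card (node \<theta> ` {..<N}) = N"
    proof (subst card_image)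
      show "inj_on (node \<theta>) {..<N}" by (rule inj_onI) (use node_inj[OF inj rng] in auto)
    qed simp
    ultimately show False by simp
  qed
  have "coeff P l = 0" using P0 by simp
  thus ?thesis unfolding P_def by (simp add: coeff_sum coeff_monom split: if_splits)
qed

lemma lead_Lp:
  assumes q: "q < N"
  shows "coeff (Lp \<theta> N q) (N - 1) = inverse (Dp \<theta> N q)"
proof -
  define Q where "Q = (\<Prod>r\<in>{..<N}-{q}. [:- node \<theta> r, 1::complex:])"
  have "degree Q = (\<Sum>r\<in>{..<N}-{q}. degree [:- node \<theta> r, 1::complex:])"
    unfolding Q_def by (rule degree_prod_eq_sum_degree) auto
  also have "\<dots> = N - 1" using q by (simp add: card_Diff_singleton_if)
  finally have dQ: "degree Q = N - 1" .
  have "lead_coeff Q = 1" unfolding Q_def by (simp add: lead_coeff_prod)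
  hence "coeff Q (N - 1) = 1" using dQ by simp
  thus ?thesis unfolding Lp_def Q_def[symmetric] by simp
qed

end



lemma root_sum:
  fixes N l j :: nat
  assumes N: "0 < N" and l: "l < N" and j: "j < N"
  shows "(\<Sum>k<N. exp ((of_nat l - of_nat j) * (2 * pi * \<i> / of_nat N)) ^ k) = (if l = j then of_nat N else 0)"
proof (cases "l = j")
  case True thus ?thesis by simp
next
  case False
  define r where "r = exp ((of_nat l - of_nat j) * (2 * pi * \<i> / of_nat N))"
  have r1: "r \<noteq> 1"
  proof
    assume "r = 1"
    then obtain n :: int where n: "Im ((of_nat l - of_nat j) * (2 * pi * \<i> / of_nat N)) = of_int (2 * n) * pi"
      unfolding r_def exp_eq_1 by blast
    hence "(real l - real j) * (2 * pi / real N) = 2 * n * pi" by simp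
    hence "2 * pi * (real l - real j) = 2 * pi * (n * real N)" using N by (simp add: field_simps)
    hence "(real l - real j) = n * real N" by (subst (asm) mult_cancel_left) simp
    hence "int l - int j = n * int N" by (metis of_int_eq_iff of_int_mult of_int_of_nat_eq of_int_diff)
    moreover have "\<bar>int l - int j\<bar> < int N" using l j by auto
    moreover have "int l - int j \<noteq> 0" using False by simp
    ultimately show False
      by (metis abs_mult abs_of_nat mult_le_cancel_right1 not_less of_nat_0_less_iff N
           abs_ge_zero dual_order.antisym mult_eq_0_iff not_one_le_zero zero_less_abs_iff le_less_trans abs_mult_pos int_one_le_iff_zero_less)
  qed
  have rN: "r ^ N = 1"
  proof -
    have "r ^ N = exp (of_nat N * ((of_nat l - of_nat j) * (2 * pi * \<i> / of_nat N)))"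
      unfolding r_def by (rule exp_of_nat_mult[symmetric])
    also have "of_nat N * ((of_nat l - of_nat j) * (2 * pi * \<i> / of_nat N)) = (of_nat l - of_nat j) * (2 * pi * \<i>)"
      using N by (simp add: field_simps)
    also have "exp \<dots> = 1"
      unfolding exp_eq_1 by (intro conjI exI[of _ "int l - int j"]) simp_all
    finally show ?thesis .
  qed
  show ?thesis using r1 rN False unfolding r_def[symmetric] by (simp add: sum_gp_strict)
qed

lemma root_pow_prod:
  fixes a :: complex and k l j :: nat
  assumes "cnj a = - a"
  shows "(exp a ^ k) ^ l * cnj (exp a ^ k) ^ j = exp ((of_nat l - of_nat j) * a) ^ k"
proof -
  have "(exp a ^ k) ^ l = exp (of_nat (k * l) * a)"
    by (simp only: power_mult[symmetric] exp_of_nat_mult)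
  moreover have "cnj (exp a ^ k) ^ j = exp (of_nat (k * j) * (- a))"
    by (simp only: complex_cnj_power exp_cnj assms power_mult[symmetric] exp_of_nat_mult)
  ultimately have "(exp a ^ k) ^ l * cnj (exp a ^ k) ^ j = exp (of_nat (k * l) * a) * exp (of_nat (k * j) * (- a))"
    by (simp only:)
  also have "\<dots> = exp (of_nat (k * l) * a + of_nat (k * j) * (- a))"
    by (rule exp_add[symmetric])
  also have "of_nat (k * l) * a + of_nat (k * j) * (- a) = of_nat k * ((of_nat l - of_nat j) * a)"
    by (simp add: algebra_simps)
  also have "exp \<dots> = exp ((of_nat l - of_nat j) * a) ^ k" by (rule exp_of_nat_mult)
  finally show ?thesis .
qed

lemma dft_coeff:
  fixes c :: "nat \<Rightarrow> complex" and N j :: nat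
  assumes N: "0 < N" and j: "j < N"
  shows "(\<Sum>k<N. (\<Sum>l<N. c l * (exp (2 * pi * \<i> / of_nat N) ^ k) ^ l) * cnj (exp (2 * pi * \<i> / of_nat N) ^ k) ^ j) = of_nat N * c j"
proof -
  define a where "a = 2 * pi * \<i> / (of_nat N :: complex)"
  have ca: "cnj a = - a" by (simp add: a_def)
  have "(\<Sum>k<N. (\<Sum>l<N. c l * (exp a ^ k) ^ l) * cnj (exp a ^ k) ^ j)
      = (\<Sum>k<N. \<Sum>l<N. c l * exp ((of_nat l - of_nat j) * a) ^ k)"
    by (simp only: sum_distrib_right mult.assoc root_pow_prod[OF ca])
  also have "\<dots> = (\<Sum>l<N. c l * (\<Sum>k<N. exp ((of_nat l - of_nat j) * a) ^ k))"
    by (subst sum.swap) (simp add: sum_distrib_left)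
  also have "\<dots> = (\<Sum>l<N. c l * (if l = j then of_nat N else 0))"
  proof -
    have rs: "\<And>l. l < N \<Longrightarrow> (\<Sum>k<N. exp ((of_nat l - of_nat j) * a) ^ k) = (if l = j then of_nat N else 0)"
      unfolding a_def by (rule root_sum[OF N _ j])
    show ?thesis by (intro sum.cong refl) (simp add: rs)
  qed
  also have "\<dots> = (\<Sum>l<N. if l = j then c l * of_nat N else 0)"
    by (intro sum.cong) auto
  also have "\<dots> = of_nat N * c j" using j by (simp add: sum.delta)
  finally show ?thesis unfolding a_def .
qed

lemma coeff_bound:
  fixes P :: "complex poly"
  assumes N: "0 < N" and d: "degree P < N" and j: "j < N" and B: "B \<ge> 0"
    and bd: "\<And>x. cmod x = 1 \<Longrightarrow> (cmod (poly P x))^2 \<le> B"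
  shows "(cmod (coeff P j))^2 \<le> B"
proof -
  define w where "w = exp (2 * pi * \<i> / (of_nat N :: complex))"
  have w0: "cmod w = 1" by (simp add: w_def)
  have w1: "cmod (w ^ k) = 1" for k by (simp add: w0 norm_power)
  have pb: "cmod (poly P (w ^ k)) \<le> sqrt B" for k
    using bd[OF w1[of k]] by (simp add: real_le_rsqrt)
  have "of_nat N * coeff P j = (\<Sum>k<N. poly P (w ^ k) * cnj (w ^ k) ^ j)"
    unfolding w_def poly_sum_lt[OF d] by (rule dft_coeff[OF N j, symmetric])
  hence "real N * cmod (coeff P j) = cmod (\<Sum>k<N. poly P (w ^ k) * cnj (w ^ k) ^ j)"
    by (metis norm_mult norm_of_nat)
  also have "\<dots> \<le> (\<Sum>k<N. cmod (poly P (w ^ k) * cnj (w ^ k) ^ j))" by (rule norm_sum)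
  also have "\<dots> = (\<Sum>k<N. cmod (poly P (w ^ k)))"
    by (simp add: norm_mult norm_power w0)
  also have "\<dots> \<le> (\<Sum>k<N. sqrt B)" by (intro sum_mono pb)
  also have "\<dots> = real N * sqrt B" by simp
  finally have "cmod (coeff P j) \<le> sqrt B" using N by simp
  hence "(cmod (coeff P j))^2 \<le> (sqrt B)^2" by (intro power_mono) auto
  thus ?thesis using B by simp
qed



lemma lam1_char:
  fixes V :: "complex mat"
  assumes V: "V \<in> carrier_mat n n" and npos: "0 < n"
  shows "(\<forall>f. smallest_eigenvalue (mat_adjoint V * V) * (\<Sum>q<n. (cmod (f q))^2) \<le> (\<Sum>j<n. (cmod (\<Sum>q<n. V $$ (j,q) * f q))^2))
       \<and> (\<exists>f. (\<Sum>q<n. (cmod (f q))^2) > 0 \<and> smallest_eigenvalue (mat_adjoint V * V) * (\<Sum>q<n. (cmod (f q))^2) = (\<Sum>j<n. (cmod (\<Sum>q<n. V $$ (j,q) * f q))^2))"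
proof -
  define A where "A = mat_adjoint V * V"
  have AC: "A \<in> carrier_mat n n" using adj_carrier[OF V] V by (auto simp: A_def)
  obtain \<mu> where ev: "eigenvalue A (of_real \<mu>)"
    and mn: "\<And>f. \<mu> * (\<Sum>q<n. (cmod (f q))^2) \<le> (\<Sum>j<n. (cmod (\<Sum>q<n. V $$ (j,q) * f q))^2)"
    using rayleigh_min[OF V npos] unfolding A_def by blast
  define E where "E = {x::real. eigenvalue A (of_real x)}"
  have cp0: "char_poly A \<noteq> 0" using degree_monic_char_poly[OF AC] by auto
  have "E = of_real -` {k. poly (char_poly A) k = 0}"
    by (auto simp: E_def eigenvalue_root_char_poly[OF AC])
  moreover have "inj (of_real :: real \<Rightarrow> complex)" by (rule injI) simp
  ultimately have finE: "finite E" using finite_vimageI[OF poly_roots_finite[OF cp0]] by simp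
  have muE: "\<mu> \<in> E" using ev by (simp add: E_def)
  have ge: "\<mu> \<le> x" if x: "x \<in> E" for x
  proof -
    obtain f where f: "(\<Sum>q<n. (cmod (f q))^2) > 0"
      "of_real x * of_real (\<Sum>q<n. (cmod (f q))^2) = (of_real (\<Sum>j<n. (cmod (\<Sum>q<n. V $$ (j,q) * f q))^2) :: complex)"
      using eig_rayleigh[OF V, of "of_real x"] x unfolding E_def A_def by blast
    have "x * (\<Sum>q<n. (cmod (f q))^2) = (\<Sum>j<n. (cmod (\<Sum>q<n. V $$ (j,q) * f q))^2)"
      proof -
      have "complex_of_real (x * (\<Sum>q<n. (cmod (f q))^2)) = of_real (\<Sum>j<n. (cmod (\<Sum>q<n. V $$ (j,q) * f q))^2)"
        using f(2) by (simp only: of_real_mult)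
      thus ?thesis by (simp only: of_real_eq_iff)
    qed
    hence "\<mu> * (\<Sum>q<n. (cmod (f q))^2) \<le> x * (\<Sum>q<n. (cmod (f q))^2)" using mn[of f] by simp
    thus ?thesis using f(1) by simp
  qed
  have Min: "smallest_eigenvalue A = \<mu>"
    unfolding smallest_eigenvalue_def E_def[symmetric]
    by (rule Min_eqI[OF finE]) (use ge muE in auto)
  obtain f where f: "(\<Sum>q<n. (cmod (f q))^2) > 0"
      "of_real \<mu> * of_real (\<Sum>q<n. (cmod (f q))^2) = (of_real (\<Sum>j<n. (cmod (\<Sum>q<n. V $$ (j,q) * f q))^2) :: complex)"
      using eig_rayleigh[OF V, of "of_real \<mu>"] ev unfolding A_def by blast
  have "\<mu> * (\<Sum>q<n. (cmod (f q))^2) = (\<Sum>j<n. (cmod (\<Sum>q<n. V $$ (j,q) * f q))^2)"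
  proof -
    have "complex_of_real (\<mu> * (\<Sum>q<n. (cmod (f q))^2)) = of_real (\<Sum>j<n. (cmod (\<Sum>q<n. V $$ (j,q) * f q))^2)"
      using f(2) by (simp only: of_real_mult)
    thus ?thesis by (simp only: of_real_eq_iff)
  qed
  thus ?thesis using mn f(1) Min unfolding A_def by auto
qed

lemma qf_vdm:
  assumes N: "0 < N"
  shows "(\<Sum>j<N. (cmod (\<Sum>q<N. vandermonde N \<theta> $$ (j,q) * f q))^2)
       = (\<Sum>j<N. (cmod (\<Sum>q<N. node \<theta> q ^ j * f q))^2) / real N"
proof -
  have "(\<Sum>j<N. (cmod (\<Sum>q<N. vandermonde N \<theta> $$ (j,q) * f q))^2)
      = (\<Sum>j<N. (cmod (complex_of_real (1 / sqrt (real N)) * (\<Sum>q<N. node \<theta> q ^ j * f q)))^2)"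
    by (intro sum.cong refl) (simp add: vdm_index sum_distrib_left mult.assoc)
  also have "\<dots> = (\<Sum>j<N. (cmod (\<Sum>q<N. node \<theta> q ^ j * f q))^2 / real N)"
    using N by (intro sum.cong refl) (simp add: norm_mult norm_divide power_mult_distrib power_divide)
  finally show ?thesis by (simp add: sum_divide_distrib)
qed

lemma abs_sum_cs:
  fixes a b :: "nat \<Rightarrow> complex"
  shows "(cmod (\<Sum>j<N. a j * b j))^2 \<le> (\<Sum>j<N. (cmod (a j))^2) * (\<Sum>j<N. (cmod (b j))^2)"
proof -
  have "cmod (\<Sum>j<N. a j * b j) \<le> (\<Sum>j<N. cmod (a j) * cmod (b j))"
    by (rule order.trans[OF norm_sum]) (simp add: norm_mult)
  hence "(cmod (\<Sum>j<N. a j * b j))^2 \<le> (\<Sum>j<N. cmod (a j) * cmod (b j))^2"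
    by (intro power_mono) auto
  also have "\<dots> \<le> (\<Sum>j<N. (cmod (a j))^2) * (\<Sum>j<N. (cmod (b j))^2)"
    by (rule Cauchy_Schwarz_ineq_sum)
  finally show ?thesis .
qed

lemma sphere_avoid:
  fixes F :: "complex set"
  assumes "finite F"
  shows "\<exists>x. cmod x = 1 \<and> x \<notin> F"
proof -
  have c: "connected (sphere (0::complex) 1)" by (rule connected_sphere) simp
  have "1 \<in> sphere (0::complex) 1" "-1 \<in> sphere (0::complex) 1" by auto
  hence "\<not> (sphere (0::complex) 1 = {} \<or> (\<exists>a. sphere (0::complex) 1 = {a}))"
    by (metis empty_iff one_neq_neg_one singletonD)
  hence "infinite (sphere (0::complex) 1)" using connected_finite_iff_sing[OF c] by blast
  hence "infinite (sphere (0::complex) 1 - F)" using assms by (metis Diff_infinite_finite)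
  hence "sphere (0::complex) 1 - F \<noteq> {}" by (metis finite.emptyI)
  thus ?thesis by auto
qed



theorem mainTheorem9:
  fixes N :: nat and \<theta> :: "nat \<Rightarrow> real"
  assumes "N \<ge> 1"
    and "inj_on \<theta> {..<N}"
    and "\<And>q. q < N \<Longrightarrow> 0 \<le> \<theta> q \<and> \<theta> q < 1"
  defines "lam1 \<equiv> smallest_eigenvalue
              (mat_adjoint (vandermonde N \<theta>) * vandermonde N \<theta>)"
    and "M \<equiv> Max ((\<lambda>p. SUP z \<in> {z. cmod z = 1}. (cmod (Tpoly N \<theta> p z))\<^sup>2) ` {..<N})"
  shows "(1 / (real N ^ 3 * M) \<le> lam1 \<and> lam1 \<le> 1 / M)
     \<and> (\<exists>p0 < N. (\<Prod>q \<in> {..<N} - {p0}. cmod (node \<theta> p0 - node \<theta> q)) \<le> real N)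
     \<and> (\<forall>p0 < N. (\<Prod>q \<in> {..<N} - {p0}. cmod (node \<theta> p0 - node \<theta> q)) \<le> real N \<longrightarrow>
          lam1 \<le> real N ^ 2 / (SUP z \<in> {z. cmod z = 1}. (\<Prod>q \<in> {..<N} - {p0}. cmod (z - node \<theta> q))\<^sup>2)
        \<and> real N ^ 2 / (SUP z \<in> {z. cmod z = 1}. (\<Prod>q \<in> {..<N} - {p0}. cmod (z - node \<theta> q))\<^sup>2)
          \<le> 4 * real N ^ 2 / (SUP z \<in> {z. cmod z = 1}. (\<Prod>q \<in> {..<N}. cmod (z - node \<theta> q))\<^sup>2))"
proof -
  note inj = assms(2) and rng = assms(3)
  have N0: "0 < N" using assms(1) by simp
  define C where "C = {z::complex. cmod z = 1}"
  have C1: "1 \<in> C" by (simp add: C_def)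
  define SUPT where "SUPT = (\<lambda>p. SUP z \<in> C. (cmod (Tpoly N \<theta> p z))\<^sup>2)"
  have M_eq: "M = Max (SUPT ` {..<N})" unfolding M_def SUPT_def C_def ..
  define c where "c = (\<lambda>p j. coeff (Lp \<theta> N p) j)"
  define s where "s = (\<lambda>p. \<Sum>j<N. (cmod (c p j))^2)"
  define D where "D = (\<lambda>p. \<Prod>q\<in>{..<N}-{p}. cmod (node \<theta> p - node \<theta> q))"
  have cT: "cmod (Tpoly N \<theta> p x) = cmod (poly (Lp \<theta> N p) x)" for p x
    by (rule cmod_Tpoly[OF inj rng])
  have polyc: "poly (Lp \<theta> N p) x = (\<Sum>j<N. c p j * x^j)" if "p < N" for p x
    unfolding c_def by (rule poly_Lp_sum[OF inj rng that])
  have polyb: "cmod (poly (Lp \<theta> N p) x) \<le> (\<Sum>j<N. cmod (c p j))" if "p < N" "cmod x = 1" for p x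
  proof -
    have "cmod (poly (Lp \<theta> N p) x) \<le> (\<Sum>j<N. cmod (c p j * x^j))"
      unfolding polyc[OF that(1)] by (rule norm_sum)
    also have "\<dots> = (\<Sum>j<N. cmod (c p j))" using that(2) by (simp add: norm_mult norm_power)
    finally show ?thesis .
  qed
  have polys: "(cmod (poly (Lp \<theta> N p) x))^2 \<le> real N * s p" if "p < N" "cmod x = 1" for p x
  proof -
    have "(cmod (poly (Lp \<theta> N p) x))^2 \<le> (\<Sum>j<N. cmod (c p j))^2"
      by (intro power_mono polyb that) simp
    also have "\<dots> \<le> (\<Sum>j<N. (cmod (c p j))^2) * card {..<N::nat}"
      by (rule sum_squared_le_sum_of_squares)
    finally show ?thesis by (simp add: s_def mult.commute)
  qed
  have bdd: "bdd_above ((\<lambda>z. (cmod (Tpoly N \<theta> p z))\<^sup>2) ` C)" if "p < N" for p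
    by (rule bdd_aboveI2[of _ _ "real N * s p"]) (use polys[OF that] in \<open>auto simp: C_def cT\<close>)
  have SUPT_ge: "(cmod (Tpoly N \<theta> p x))^2 \<le> SUPT p" if "p < N" "cmod x = 1" for p x
    unfolding SUPT_def by (rule cSUP_upper[OF _ bdd[OF that(1)]]) (use that in \<open>simp add: C_def\<close>)
  have SUPT_le: "SUPT p \<le> real N * s p" if "p < N" for p
    unfolding SUPT_def
    by (rule cSUP_least) (use polys[OF that] in \<open>auto simp: C_def cT intro: exI[of _ 1]\<close>)
  have SUPT1: "SUPT p \<ge> 1" if "p < N" for p
  proof -
    have "(cmod (Tpoly N \<theta> p (node \<theta> p)))^2 = 1"
      unfolding cT using poly_Lp_node[OF inj rng that that] by simp
    thus ?thesis using SUPT_ge[OF that, of "node \<theta> p"] by simp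
  qed
  have finS: "finite (SUPT ` {..<N})" and neS: "SUPT ` {..<N} \<noteq> {}" using N0 by auto
  have M_ge: "SUPT p \<le> M" if "p < N" for p
    unfolding M_eq by (rule Max_ge[OF finS]) (use that in auto)
  obtain pm where pm: "pm < N" "M = SUPT pm"
    using Max_in[OF finS neS] unfolding M_eq[symmetric] by auto
  have M1: "M \<ge> 1" using SUPT1[OF pm(1)] pm(2) by simp
  have cM: "(cmod (c p j))^2 \<le> M" if p: "p < N" and j: "j < N" for p j
    unfolding c_def
  proof (rule coeff_bound[OF N0 _ j])
    show "degree (Lp \<theta> N p) < N" using degree_Lp[OF inj rng p] N0 by linarith
    show "0 \<le> M" using M1 by simp
    fix x :: complex assume "cmod x = 1"
    thus "(cmod (poly (Lp \<theta> N p) x))^2 \<le> M"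
      using SUPT_ge[OF p, of x] M_ge[OF p] cT[of p x] by simp
  qed
  have sM: "s p \<le> real N * M" if p: "p < N" for p
  proof -
    have "s p \<le> (\<Sum>j<N. M)" unfolding s_def by (intro sum_mono cM p) simp
    thus ?thesis by simp
  qed
  obtain LA: "\<And>f. lam1 * (\<Sum>q<N. (cmod (f q))^2) \<le> (\<Sum>j<N. (cmod (\<Sum>q<N. node \<theta> q ^ j * f q))^2) / real N"
    and LB: "\<exists>f. (\<Sum>q<N. (cmod (f q))^2) > 0 \<and> lam1 * (\<Sum>q<N. (cmod (f q))^2) = (\<Sum>j<N. (cmod (\<Sum>q<N. node \<theta> q ^ j * f q))^2) / real N"
    using lam1_char[OF vdm_carrier N0, of \<theta>] unfolding lam1_def qf_vdm[OF N0] by blast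
  have lower: "1 / (real N ^ 3 * M) \<le> lam1"
  proof -
    obtain f where f: "(\<Sum>q<N. (cmod (f q))^2) > 0"
      "lam1 * (\<Sum>q<N. (cmod (f q))^2) = (\<Sum>j<N. (cmod (\<Sum>q<N. node \<theta> q ^ j * f q))^2) / real N"
      using LB by blast
    define W where "W = (\<lambda>j. \<Sum>q<N. node \<theta> q ^ j * f q)"
    define SW where "SW = (\<Sum>j<N. (cmod (W j))^2)"
    have fp: "f p = (\<Sum>j<N. c p j * W j)" if p: "p < N" for p
    proof -
      have "(\<Sum>j<N. c p j * W j) = (\<Sum>j<N. \<Sum>q<N. c p j * (node \<theta> q ^ j * f q))"
        unfolding W_def by (simp add: sum_distrib_left)
      also have "\<dots> = (\<Sum>q<N. \<Sum>j<N. c p j * (node \<theta> q ^ j * f q))" by (rule sum.swap)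
      also have "\<dots> = (\<Sum>q<N. f q * (\<Sum>j<N. c p j * node \<theta> q ^ j))"
        by (simp add: sum_distrib_left mult_ac)
      also have "\<dots> = (\<Sum>q<N. f q * (if q = p then 1 else 0))"
        by (intro sum.cong refl) (simp add: polyc[OF p, symmetric] poly_Lp_node[OF inj rng p])
      also have "\<dots> = (\<Sum>q<N. if q = p then f q else 0)" by (intro sum.cong) auto
      also have "\<dots> = f p" using p by (simp add: sum.delta)
      finally show ?thesis by simp
    qed
    have fpb: "(cmod (f p))^2 \<le> real N * M * SW" if p: "p < N" for p
    proof -
      have "(cmod (f p))^2 \<le> s p * SW"
        unfolding fp[OF p] s_def SW_def by (rule abs_sum_cs)
      also have "\<dots> \<le> real N * M * SW"
        by (rule mult_right_mono[OF sM[OF p]]) (simp add: SW_def sum_nonneg)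
      finally show ?thesis .
    qed
    have "(\<Sum>q<N. (cmod (f q))^2) \<le> (\<Sum>q<N. real N * M * SW)"
      by (intro sum_mono fpb) simp
    also have "\<dots> = real N ^ 2 * M * SW" by (simp add: power2_eq_square)
    also have "SW = real N * (lam1 * (\<Sum>q<N. (cmod (f q))^2))"
      using f(2) N0 unfolding SW_def W_def by (simp add: field_simps)
    finally have "(\<Sum>q<N. (cmod (f q))^2) \<le> (real N ^ 3 * M) * lam1 * (\<Sum>q<N. (cmod (f q))^2)"
      by (simp add: power3_eq_cube power2_eq_square mult_ac)
    hence "1 \<le> (real N ^ 3 * M) * lam1" using f(1) by simp
    moreover have "real N ^ 3 * M > 0" using N0 M1 by simp
    ultimately show ?thesis by (simp add: field_simps)
  qed
  have upper: "lam1 \<le> 1 / M"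
  proof -
    define w where "w = (\<lambda>q. \<Sum>l<N. c q l * cnj (c pm l))"
    have Ww: "(\<Sum>q<N. node \<theta> q ^ j * w q) = cnj (c pm j)" if j: "j < N" for j
    proof -
      have "(\<Sum>q<N. node \<theta> q ^ j * w q) = (\<Sum>q<N. \<Sum>l<N. node \<theta> q ^ j * c q l * cnj (c pm l))"
        unfolding w_def by (simp add: sum_distrib_left mult.assoc)
      also have "\<dots> = (\<Sum>l<N. \<Sum>q<N. node \<theta> q ^ j * c q l * cnj (c pm l))" by (rule sum.swap)
      also have "\<dots> = (\<Sum>l<N. (\<Sum>q<N. node \<theta> q ^ j * c q l) * cnj (c pm l))"
        by (simp add: sum_distrib_right)
      also have "\<dots> = (\<Sum>l<N. (if j = l then 1 else 0) * cnj (c pm l))"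
        by (intro sum.cong refl) (simp add: c_def lagrange_coeff[OF inj rng j])
      also have "\<dots> = (\<Sum>l<N. if j = l then cnj (c pm l) else 0)" by (intro sum.cong) auto
      also have "\<dots> = cnj (c pm j)" using j by (simp add: sum.delta)
      finally show ?thesis .
    qed
    have qw: "(\<Sum>j<N. (cmod (\<Sum>q<N. node \<theta> q ^ j * w q))^2) = s pm"
      unfolding s_def by (intro sum.cong refl) (simp add: Ww)
    have wpm: "w pm = of_real (s pm)"
      unfolding w_def s_def by (simp add: cn2)
    have spos: "s pm > 0"
    proof -
      have "1 \<le> real N * s pm" using SUPT1[OF pm(1)] SUPT_le[OF pm(1)] by linarith
      moreover have "s pm \<ge> 0" unfolding s_def by (simp add: sum_nonneg)
      ultimately show ?thesis by (cases "s pm = 0") auto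
    qed
    have nvw: "(\<Sum>q<N. (cmod (w q))^2) \<ge> (s pm)^2"
    proof -
      have "(cmod (w pm))^2 \<le> (\<Sum>q<N. (cmod (w q))^2)"
        by (rule member_le_sum) (use pm in auto)
      thus ?thesis using wpm spos by simp
    qed
    have la: "lam1 * (\<Sum>q<N. (cmod (w q))^2) \<le> s pm / real N"
      using LA[of w] unfolding qw .
    show ?thesis
    proof (cases "lam1 \<le> 0")
      case True
      have "0 \<le> 1 / M" using M1 by simp
      thus ?thesis using True by linarith
    next
      case False
      hence "lam1 * (s pm)^2 \<le> s pm / real N"
      proof -
        have "lam1 * (s pm)^2 \<le> lam1 * (\<Sum>q<N. (cmod (w q))^2)"
          using nvw False by (intro mult_left_mono) auto
        thus ?thesis using la by linarith
      qed
      hence "(lam1 * s pm) * s pm \<le> (1 / real N) * s pm" by (simp add: power2_eq_square mult_ac)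
      hence "lam1 * s pm \<le> 1 / real N" by (rule mult_right_le_imp_le) (use spos in simp)
      hence "lam1 \<le> 1 / (real N * s pm)" using spos N0 by (simp add: field_simps)
      also have "\<dots> \<le> 1 / M"
        using SUPT_le[OF pm(1)] pm(2) M1 by (intro divide_left_mono) auto
      finally show ?thesis .
    qed
  qed
  have Dpos: "D p > 0" if p: "p < N" for p
    unfolding D_def by (rule prod_pos) (use node_neq[OF inj rng] p in auto)
  have cDp: "cmod (Dp \<theta> N p) = D p" for p unfolding D_def by (rule cmod_Dp[OF inj rng])
  have part2: "\<exists>p0<N. D p0 \<le> real N"
  proof (rule ccontr)
    assume "\<not> (\<exists>p0<N. D p0 \<le> real N)"
    hence big: "\<And>q. q < N \<Longrightarrow> real N < D q" by auto
    have "(\<Sum>q<N. node \<theta> q ^ (N-1) * c q (N-1)) = 1"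
      using lagrange_coeff[OF inj rng, of "N-1" "N-1"] N0 by (simp add: c_def)
    hence "1 = cmod (\<Sum>q<N. node \<theta> q ^ (N-1) * c q (N-1))" by simp
    also have "\<dots> \<le> (\<Sum>q<N. cmod (node \<theta> q ^ (N-1) * c q (N-1)))" by (rule norm_sum)
    also have "\<dots> = (\<Sum>q<N. 1 / D q)"
    proof (intro sum.cong refl)
      fix q assume "q \<in> {..<N}"
      hence q: "q < N" by simp
      have "coeff (Lp \<theta> N q) (N-1) = inverse (Dp \<theta> N q)" by (rule lead_Lp[OF inj rng q])
      hence "cmod (c q (N-1)) = 1 / D q"
        by (simp add: c_def norm_inverse cDp divide_inverse)
      thus "cmod (node \<theta> q ^ (N-1) * c q (N-1)) = 1 / D q" by (simp add: norm_mult norm_power)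
    qed
    also have "\<dots> < (\<Sum>q<N. 1 / real N)"
    proof (rule sum_strict_mono)
      fix q assume "q \<in> {..<N}"
      hence q: "q < N" by simp
      show "1 / D q < 1 / real N" using big[OF q] N0 by (intro divide_strict_left_mono) auto
    qed (use N0 in auto)
    also have "\<dots> = 1" using N0 by simp
    finally show False by simp
  qed
  have part3: "lam1 \<le> real N ^ 2 / (SUP z \<in> C. (\<Prod>q \<in> {..<N} - {p0}. cmod (z - node \<theta> q))\<^sup>2)
        \<and> real N ^ 2 / (SUP z \<in> C. (\<Prod>q \<in> {..<N} - {p0}. cmod (z - node \<theta> q))\<^sup>2)
          \<le> 4 * real N ^ 2 / (SUP z \<in> C. (\<Prod>q \<in> {..<N}. cmod (z - node \<theta> q))\<^sup>2)"
    if p0: "p0 < N" and Dp0: "D p0 \<le> real N" for p0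
  proof -
    define P0 where "P0 = (\<lambda>x. \<Prod>q \<in> {..<N} - {p0}. cmod (x - node \<theta> q))"
    define P1 where "P1 = (\<lambda>x. \<Prod>q \<in> {..<N}. cmod (x - node \<theta> q))"
    define S0 where "S0 = (SUP z \<in> C. (P0 z)\<^sup>2)"
    define S1 where "S1 = (SUP z \<in> C. (P1 z)\<^sup>2)"
    have D0: "D p0 > 0" by (rule Dpos[OF p0])
    have P0T: "P0 x = D p0 * cmod (Tpoly N \<theta> p0 x)" for x
    proof -
      have "cmod (poly (Lp \<theta> N p0) x) = P0 x / D p0"
        using poly_Lp[OF inj rng, of p0 x] unfolding P0_def by (simp add: norm_divide cDp prod_norm)
      thus ?thesis using D0 cT[of p0 x] by (simp add: field_simps)
    qed
    have P0le: "(P0 x)^2 \<le> real N ^ 2 * M" if x: "cmod x = 1" for x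
    proof -
      have "(P0 x)^2 = (D p0)^2 * (cmod (Tpoly N \<theta> p0 x))^2" unfolding P0T by (simp add: power_mult_distrib)
      also have "\<dots> \<le> (real N)^2 * M"
      proof (rule mult_mono)
        show "(D p0)^2 \<le> (real N)^2" using D0 Dp0 by (intro power_mono) auto
        show "(cmod (Tpoly N \<theta> p0 x))^2 \<le> M" using SUPT_ge[OF p0 x] M_ge[OF p0] by simp
      qed auto
      finally show ?thesis .
    qed
    have P1eq: "P1 x = cmod (x - node \<theta> p0) * P0 x" for x
      unfolding P1_def P0_def using p0 by (simp add: prod.remove)
    have P1le: "(P1 x)^2 \<le> 4 * (P0 x)^2" if x: "cmod x = 1" for x
    proof -
      have "cmod (x - node \<theta> p0) \<le> 2"
        using norm_triangle_ineq4[of x "node \<theta> p0"] x by simp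
      hence "(cmod (x - node \<theta> p0))^2 \<le> 2^2" by (intro power_mono) auto
      moreover have "P0 x \<ge> 0" unfolding P0_def by (simp add: prod_nonneg)
      ultimately show ?thesis unfolding P1eq power_mult_distrib
        by (intro mult_right_mono) auto
    qed
    have bdd0: "bdd_above ((\<lambda>z. (P0 z)\<^sup>2) ` C)"
      by (rule bdd_aboveI2[of _ _ "real N ^ 2 * M"]) (use P0le in \<open>auto simp: C_def\<close>)
    have S0ge: "(P0 x)^2 \<le> S0" if "cmod x = 1" for x
      unfolding S0_def by (rule cSUP_upper[OF _ bdd0]) (use that in \<open>simp add: C_def\<close>)
    have S0le: "S0 \<le> real N ^ 2 * M"
      unfolding S0_def by (rule cSUP_least) (use P0le in \<open>auto simp: C_def intro: exI[of _ 1]\<close>)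
    have "P0 (node \<theta> p0) = D p0" unfolding P0_def D_def ..
    hence S0pos: "S0 > 0" using S0ge[of "node \<theta> p0"] D0
      by (metis node_norm order_less_le_trans zero_less_power)
    have P1S: "(P1 x)^2 \<le> 4 * S0" if x: "cmod x = 1" for x
      using P1le[OF x] S0ge[OF x] by linarith
    have S1le: "S1 \<le> 4 * S0"
      unfolding S1_def
      by (rule cSUP_least) (use P1S in \<open>auto simp: C_def intro: exI[of _ 1]\<close>)
    have bdd1: "bdd_above ((\<lambda>z. (P1 z)\<^sup>2) ` C)"
      by (rule bdd_aboveI2[of _ _ "4 * S0"]) (use P1S in \<open>auto simp: C_def\<close>)
    obtain x0 where x0: "cmod x0 = 1" "x0 \<notin> node \<theta> ` {..<N}"
      using sphere_avoid[of "node \<theta> ` {..<N}"] by auto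
    have "P1 x0 > 0" unfolding P1_def by (rule prod_pos) (use x0 in auto)
    moreover have "(P1 x0)^2 \<le> S1"
      unfolding S1_def by (rule cSUP_upper[OF _ bdd1]) (use x0 in \<open>simp add: C_def\<close>)
    ultimately have S1pos: "S1 > 0" by (meson order_less_le_trans zero_less_power)
    have M0: "M > 0" using M1 by simp
    have g1: "1 / M \<le> real N ^ 2 / S0" using S0le S0pos M0 by (simp add: field_simps)
    have "S1 * (real N)^2 \<le> (4 * S0) * (real N)^2" using S1le by (intro mult_right_mono) auto
    hence g2: "real N ^ 2 / S0 \<le> 4 * real N ^ 2 / S1" using S0pos S1pos
      by (simp add: field_simps)
    show ?thesis using upper g1 g2 unfolding S0_def S1_def P0_def P1_def by simp
  qed
  show ?thesis using lower upper part2 part3 unfolding D_def C_def by blast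
qed


end
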